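(* Let $m\ge 1$ and $0\le k\le m$ be integers. Let $U_1$ be the $2m\times 2m$ integer matrix whose entries in positions $(i,i+1)$ and $(i+1,i)$ ($1\le i\le 2m-1$) are $1$ and all of whose other entries are $0$. For a subset $\alpha\subseteq\{1,\dots,2m\}$, let $U_1(\alpha)$ denote the submatrix of $U_1$ obtained by deleting the rows and columns with indices in $\alpha$. Then $$\sum_{\alpha\subseteq\{1,\dots,2m\},\ |\alpha|=2k}\mathrm{Hf}\big(U_1(\alpha)\big)=\binom{m+k}{m-k}.$$
   Context: For a symmetric matrix $A=(a_{ij})$ of even order $n$ over a commutative ring, the hafnian is $\mathrm{Hf}(A)=\sum a_{i_1i_2}a_{i_3i_4}\cdots a_{i_{n-1}i_n}$, where the sum runs over all partitions of the index set of $A$ into $n/2$ disjoint unordered pairs $\{i_1,i_2\},\dots,\{i_{n-1},i_n\}$ (each partition counted once). The hafnian of the empty ($0\times 0$) matrix is $1$. *)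

theory Defs
  imports Main
begin

definition perfect_matchings :: "nat set \<Rightarrow> nat set set set" where
  "perfect_matchings S =
     {M. (\<forall>e\<in>M. \<exists>i j. i \<noteq> j \<and> i \<in> S \<and> j \<in> S \<and> e = {i, j}) \<and>
         (\<forall>x\<in>S. \<exists>!e. e \<in> M \<and> x \<in> e)}"

text \<open>Hafnian of the symmetric matrix A restricted to the rows/columns with
  indices in S (i.e. the principal submatrix on S); each pair e contributes
  the entry A (Min e) (Max e).  The hafnian of the empty matrix is 1.\<close>
definition hafnian :: "(nat \<Rightarrow> nat \<Rightarrow> 'a::comm_ring_1) \<Rightarrow> nat set \<Rightarrow> 'a" where
  "hafnian A S = (\<Sum>M\<in>perfect_matchings S. \<Prod>e\<in>M. A (Min e) (Max e))"

definition U1 :: "nat \<Rightarrow> nat \<Rightarrow> nat \<Rightarrow> int" where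
  "U1 m i j = (if i \<in> {1..2*m} \<and> j \<in> {1..2*m} \<and> (i = j + 1 \<or> j = i + 1) then 1 else 0)"

end

theory Submission
  imports Defs
begin


definition NC :: "nat \<Rightarrow> nat \<Rightarrow> nat set set" where
 "NC N j = {I. I \<subseteq> {1..N} \<and> (\<forall>i\<in>I. Suc i \<notin> I) \<and> card I = j}"

lemma NC_finite: "finite (NC N j)"
  by (rule finite_subset[of _ "Pow {1..N}"]) (auto simp: NC_def)

lemma NC_zero: "NC N 0 = {{}}"
proof -
  have "I = {}" if "I \<subseteq> {1..N}" "card I = 0" for I :: "nat set"
    using that finite_subset[OF that(1)] by simp
  then show ?thesis by (auto simp: NC_def)
qed

lemma card_NC0: "card (NC 0 j) = (0 + 1 - j) choose j"
proof -
  have "NC 0 j = (if j = 0 then {{}} else {})" by (auto simp: NC_def)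
  then show ?thesis by (cases j) auto
qed

lemma card_NC1: "card (NC 1 j) = (1 + 1 - j) choose j"
proof -
  have e: "NC 1 j = {I. I \<in> Pow {1} \<and> card I = j}"
    unfolding NC_def by auto
  have p: "Pow {1::nat} = {{},{1}}" by (auto simp: Pow_insert)
  consider "j = 0" | "j = 1" | "j \<ge> 2" by linarith
  then show ?thesis
  proof cases
    case 1
    then have "NC 1 j = {{}}" unfolding e p by auto
    then show ?thesis using 1 by simp
  next
    case 2
    then have "NC 1 j = {{1}}" unfolding e p by auto
    then show ?thesis using 2 by simp
  next
    case 3
    then have "NC 1 j = {}" unfolding e p by auto
    then show ?thesis using 3 by simp
  qed
qed

lemma NC_step: "NC (Suc (Suc n)) (Suc j) = NC (Suc n) (Suc j) \<union> insert (Suc (Suc n)) ` NC n j"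
proof
  show "NC (Suc (Suc n)) (Suc j) \<subseteq> NC (Suc n) (Suc j) \<union> insert (Suc (Suc n)) ` NC n j"
  proof
    fix I assume I: "I \<in> NC (Suc (Suc n)) (Suc j)"
    show "I \<in> NC (Suc n) (Suc j) \<union> insert (Suc (Suc n)) ` NC n j"
    proof (cases "Suc (Suc n) \<in> I")
      case False
      then have "I \<subseteq> {1..Suc n}" using I by (auto simp: NC_def le_Suc_eq)
      then show ?thesis using I by (auto simp: NC_def)
    next
      case True
      then have "Suc n \<notin> I" using I by (auto simp: NC_def)
      then have s: "I - {Suc (Suc n)} \<subseteq> {1..n}" using I by (auto simp: NC_def le_Suc_eq)
      have fI: "finite I" using I by (auto simp: NC_def intro: finite_subset)
      have "I - {Suc (Suc n)} \<in> NC n j" using s I True fI by (auto simp: NC_def)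
      moreover have "I = insert (Suc (Suc n)) (I - {Suc (Suc n)})" using True by auto
      ultimately show ?thesis by blast
    qed
  qed
next
  show "NC (Suc n) (Suc j) \<union> insert (Suc (Suc n)) ` NC n j \<subseteq> NC (Suc (Suc n)) (Suc j)"
  proof
    fix I assume "I \<in> NC (Suc n) (Suc j) \<union> insert (Suc (Suc n)) ` NC n j"
    then show "I \<in> NC (Suc (Suc n)) (Suc j)"
    proof
      assume "I \<in> NC (Suc n) (Suc j)" then show ?thesis by (auto simp: NC_def)
    next
      assume "I \<in> insert (Suc (Suc n)) ` NC n j"
      then obtain J where J: "J \<in> NC n j" "I = insert (Suc (Suc n)) J" by blast
      have fJ: "finite J" using J by (auto simp: NC_def intro: finite_subset)
      have "Suc (Suc n) \<notin> J" "Suc n \<notin> J" using J by (auto simp: NC_def)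
      moreover have "\<forall>i\<in>J. Suc i \<noteq> Suc (Suc n)" using J by (auto simp: NC_def)
      ultimately show ?thesis using J fJ by (auto simp: NC_def)
    qed
  qed
qed

lemma NC_disj: "NC (Suc n) (Suc j) \<inter> insert (Suc (Suc n)) ` NC n j = {}"
  by (auto simp: NC_def)

lemma NC_inj: "inj_on (insert (Suc (Suc n))) (NC n j)"
proof (rule inj_onI)
  fix A B assume A: "A \<in> NC n j" and B: "B \<in> NC n j" and e: "insert (Suc (Suc n)) A = insert (Suc (Suc n)) B"
  have "Suc (Suc n) \<notin> A" "Suc (Suc n) \<notin> B" using A B by (auto simp: NC_def)
  then show "A = B" using e by (metis Diff_insert_absorb)
qed

lemma card_NC: "card (NC N j) = (N + 1 - j) choose j"
proof (induction N arbitrary: j rule: less_induct)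
  case (less N)
  show ?case
  proof (cases N)
    case 0 then show ?thesis using card_NC0 by simp
  next
    case (Suc N1)
    show ?thesis
    proof (cases N1)
      case 0 then show ?thesis using Suc card_NC1 by simp
    next
      case (Suc n)
      note N = \<open>N = Suc N1\<close> Suc
      show ?thesis
      proof (cases j)
        case 0 then show ?thesis by (simp add: NC_zero)
      next
        case (Suc j')
        have "card (NC N j) = card (NC (Suc n) (Suc j')) + card (insert (Suc (Suc n)) ` NC n j')"
          unfolding N Suc NC_step
          by (rule card_Un_disjoint) (auto simp: NC_finite NC_disj)
        also have "\<dots> = ((Suc n + 1 - Suc j') choose Suc j') + ((n + 1 - j') choose j')"
          using less.IH[of "Suc n"] less.IH[of n] N
          by (simp add: card_image NC_inj)
        also have "\<dots> = (N + 1 - j) choose j"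
        proof (cases "j' \<le> n + 1")
          case True
          then have "N + 1 - j = Suc (n + 1 - j')" using N Suc by simp
          then show ?thesis using Suc True by simp
        next
          case False
          then show ?thesis using N Suc by simp
        qed
        finally show ?thesis .
      qed
    qed
  qed
qed



lemma PM_sub: "M \<in> perfect_matchings S \<Longrightarrow> M \<subseteq> Pow S"
  unfolding perfect_matchings_def by blast

lemma pm_edge: "M \<in> perfect_matchings S \<Longrightarrow> e \<in> M \<Longrightarrow> \<exists>i j. i \<noteq> j \<and> i \<in> S \<and> j \<in> S \<and> e = {i, j}"
proof -
  assume a: "M \<in> perfect_matchings S" "e \<in> M"
  have "\<forall>e\<in>M. \<exists>i j. i \<noteq> j \<and> i \<in> S \<and> j \<in> S \<and> e = {i, j}"
    using a(1) by (simp add: perfect_matchings_def)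
  then show ?thesis using a(2) by (rule bspec)
qed

lemma pm_uniq: "M \<in> perfect_matchings S \<Longrightarrow> x \<in> S \<Longrightarrow> \<exists>!e. e \<in> M \<and> x \<in> e"
proof -
  assume a: "M \<in> perfect_matchings S" "x \<in> S"
  have "\<forall>x\<in>S. \<exists>!e. e \<in> M \<and> x \<in> e"
    using a(1) by (simp add: perfect_matchings_def)
  then show ?thesis using a(2) by (rule bspec)
qed

lemma finite_PM: "finite S \<Longrightarrow> finite (perfect_matchings S)"
  by (rule finite_subset[of _ "Pow (Pow S)"]) (auto dest: PM_sub)

lemma U1_val:
  assumes "i \<in> {1..2*m}" "j \<in> {1..2*m}" "i \<noteq> j"
  shows "U1 m (Min {i,j}) (Max {i,j}) = (if \<exists>a. {i,j} = {a, Suc a} then 1 else 0)"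
proof (cases "i < j")
  case True
  then have "Min {i,j} = i" "Max {i,j} = j" by auto
  moreover have "(\<exists>a. {i,j} = {a, Suc a}) \<longleftrightarrow> j = i + 1"
    using True by (auto simp: doubleton_eq_iff)
  ultimately show ?thesis using assms True by (auto simp: U1_def)
next
  case False
  then have "j < i" using assms by simp
  then have "Min {i,j} = j" "Max {i,j} = i" by auto
  moreover have "(\<exists>a. {i,j} = {a, Suc a}) \<longleftrightarrow> i = j + 1"
    using \<open>j < i\<close> by (auto simp: doubleton_eq_iff)
  ultimately show ?thesis using assms \<open>j < i\<close> by (auto simp: U1_def)
qed

definition good :: "nat set set \<Rightarrow> bool" where
  "good M = (\<forall>e\<in>M. \<exists>a. e = {a, Suc a})"

lemma haf_eq:
  assumes S: "S \<subseteq> {1..2*m}"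
  shows "hafnian (U1 m) S = int (card {M \<in> perfect_matchings S. good M})"
proof -
  have fS: "finite S" using S finite_subset by blast
  have pr: "(\<Prod>e\<in>M. U1 m (Min e) (Max e)) = (if good M then 1 else 0)"
    if M: "M \<in> perfect_matchings S" for M
  proof -
    have fM: "finite M" by (rule finite_subset[OF PM_sub[OF M]]) (simp add: fS)
    have ed: "\<exists>i j. i \<noteq> j \<and> i \<in> S \<and> j \<in> S \<and> e = {i, j}" if "e \<in> M" for e
      using pm_edge[OF M that] .
    have val: "U1 m (Min e) (Max e) = (if \<exists>a. e = {a, Suc a} then 1 else 0)" if eM: "e \<in> M" for e
    proof -
      obtain i j where ij: "i \<noteq> j" "i \<in> S" "j \<in> S" "e = {i,j}" using ed[OF eM] by blast
      have "i \<in> {1..2*m}" "j \<in> {1..2*m}" using ij(2,3) S by blast+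
      from U1_val[OF this ij(1)] show ?thesis unfolding ij(4) .
    qed
    show ?thesis
    proof (cases "good M")
      case True
      then show ?thesis using val by (auto simp: good_def intro!: prod.neutral)
    next
      case False
      then obtain e where "e \<in> M" "\<not> (\<exists>a. e = {a, Suc a})" by (auto simp: good_def)
      then have "\<exists>e\<in>M. U1 m (Min e) (Max e) = 0" using val by auto
      then show ?thesis using False fM by (simp add: prod_zero)
    qed
  qed
  have "hafnian (U1 m) S = (\<Sum>M\<in>perfect_matchings S. (if good M then 1 else 0))"
    unfolding hafnian_def using pr by (rule sum.cong[OF refl])
  also have "\<dots> = (\<Sum>M\<in>{M \<in> perfect_matchings S. good M}. 1)"
    using sum.inter_filter[OF finite_PM[OF fS], where P=good and g="\<lambda>_. 1::int"] by simp
  also have "\<dots> = int (card {M \<in> perfect_matchings S. good M})"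
    by simp
  finally show ?thesis .
qed



definition dm :: "nat \<Rightarrow> nat set" where "dm i = {i, Suc i}"

lemma Min_dm[simp]: "Min (dm i) = i" by (simp add: dm_def)

lemma dm_disj: "(\<forall>i\<in>I. Suc i \<notin> I) \<Longrightarrow> i \<in> I \<Longrightarrow> j \<in> I \<Longrightarrow> i \<noteq> j \<Longrightarrow> dm i \<inter> dm j = {}"
  unfolding dm_def by auto

lemma card_dm: "finite I \<Longrightarrow> \<forall>i\<in>I. Suc i \<notin> I \<Longrightarrow> card (\<Union>(dm ` I)) = 2 * card I"
proof -
  assume f: "finite I" and nc: "\<forall>i\<in>I. Suc i \<notin> I"
  have "card (\<Union>(dm ` I)) = (\<Sum>i\<in>I. card (dm i))"
    by (rule card_UN_disjoint) (use f dm_disj[OF nc] in \<open>auto simp: dm_def\<close>)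
  also have "\<dots> = (\<Sum>i\<in>I. 2)" by (simp add: dm_def)
  finally show ?thesis by simp
qed

lemma Min_img: "Min ` (dm ` I) = I"
  by (simp add: image_image)

lemma pm_union: "M \<in> perfect_matchings S \<Longrightarrow> \<Union>M = S"
proof
  assume M: "M \<in> perfect_matchings S"
  show "\<Union>M \<subseteq> S" using PM_sub[OF M] by blast
  show "S \<subseteq> \<Union>M"
  proof
    fix x assume "x \<in> S"
    from pm_uniq[OF M this] obtain e where "e \<in> M" "x \<in> e" by blast
    then show "x \<in> \<Union>M" by blast
  qed
qed

lemma good_img: "good M \<Longrightarrow> dm ` (Min ` M) = M"
proof -
  assume g: "good M"
  have "dm (Min e) = e" if "e \<in> M" for e
    using g that unfolding good_def by (auto simp: dm_def)
  then show ?thesis by (simp add: image_image)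
qed

lemma dm_pm:
  assumes nc: "\<forall>i\<in>I. Suc i \<notin> I"
  shows "dm ` I \<in> perfect_matchings (\<Union>(dm ` I))"
  unfolding perfect_matchings_def
proof (intro CollectI conjI ballI)
  fix e assume "e \<in> dm ` I"
  then obtain i where "i \<in> I" "e = dm i" by blast
  then show "\<exists>a b. a \<noteq> b \<and> a \<in> \<Union>(dm ` I) \<and> b \<in> \<Union>(dm ` I) \<and> e = {a, b}"
    by (intro exI[of _ i] exI[of _ "Suc i"]) (auto simp: dm_def)
next
  fix x assume "x \<in> \<Union>(dm ` I)"
  then obtain i where i: "i \<in> I" "x \<in> dm i" by blast
  show "\<exists>!e. e \<in> dm ` I \<and> x \<in> e"
  proof (rule ex1I[of _ "dm i"])
    show "dm i \<in> dm ` I \<and> x \<in> dm i" using i by blast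
  next
    fix e assume "e \<in> dm ` I \<and> x \<in> e"
    then obtain j where j: "j \<in> I" "e = dm j" "x \<in> dm j" by blast
    show "e = dm i"
    proof (rule ccontr)
      assume "e \<noteq> dm i"
      then have "i \<noteq> j" using j by blast
      then show False using dm_disj[OF nc i(1) j(1)] i j by blast
    qed
  qed
qed

lemma good_dm: "good (dm ` I)"
  unfolding good_def dm_def by blast

lemma pm_nc:
  assumes M: "M \<in> perfect_matchings S" and g: "good M"
  shows "\<forall>i\<in>Min ` M. Suc i \<notin> Min ` M"
proof
  fix i assume "i \<in> Min ` M"
  then have i: "dm i \<in> M" using good_img[OF g] by (metis image_eqI)
  show "Suc i \<notin> Min ` M"
  proof
    assume "Suc i \<in> Min ` M"
    then have s: "dm (Suc i) \<in> M" using good_img[OF g] by (metis image_eqI)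
    have "Suc i \<in> S" using pm_union[OF M] i by (auto simp: dm_def)
    then have "\<exists>!e. e \<in> M \<and> Suc i \<in> e" using pm_uniq[OF M] by blast
    moreover have "Suc i \<in> dm i" "Suc i \<in> dm (Suc i)" by (simp_all add: dm_def)
    ultimately have "dm i = dm (Suc i)" using i s by blast
    moreover have "i \<in> dm i" by (simp add: dm_def)
    ultimately have "i \<in> dm (Suc i)" by blast
    then show False by (simp add: dm_def)
  qed
qed

lemma finite_PM_elem: "finite S \<Longrightarrow> M \<in> perfect_matchings S \<Longrightarrow> finite M"
  by (rule finite_subset[OF PM_sub]) auto

theorem mainTheorem3:
  fixes m k :: nat
  assumes "1 \<le> m" and "k \<le> m"
  shows "(\<Sum>\<alpha>\<in>{\<alpha>. \<alpha> \<subseteq> {1..2*m} \<and> card \<alpha> = 2*k}. hafnian (U1 m) ({1..2*m} - \<alpha>))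
         = int ((m + k) choose (m - k))"
proof -
  define T where "T = {1..2*m}"
  define AA where "AA = {\<alpha>. \<alpha> \<subseteq> T \<and> card \<alpha> = 2*k}"
  define G where "G = (\<lambda>\<alpha>. {M \<in> perfect_matchings (T - \<alpha>). good M})"
  define f where "f = (\<lambda>I. (T - \<Union>(dm ` I), dm ` I))"
  define f' where "f' = (\<lambda>p::nat set \<times> nat set set. Min ` snd p)"
  define NN where "NN = NC (2*m - 1) (m - k)"
  have fT: "finite T" and cT: "card T = 2*m" by (auto simp: T_def)
  have fAA: "finite AA" unfolding AA_def
    by (rule finite_subset[of _ "Pow T"]) (auto simp: fT)
  have fG: "finite (G \<alpha>)" for \<alpha>
    unfolding G_def by (rule finite_subset[OF _ finite_PM[of "T - \<alpha>"]]) (auto simp: fT)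
  have dmT: "\<Union>(dm ` I) \<subseteq> T" if IS: "I \<subseteq> {1..2*m - 1}" for I
  proof
    fix x assume "x \<in> \<Union>(dm ` I)"
    then obtain i where i: "i \<in> I" "x \<in> dm i" by blast
    then have "1 \<le> i" "i \<le> 2*m - 1" using IS by auto
    then show "x \<in> T" using i(2) assms(1) by (auto simp: dm_def T_def)
  qed
  have bij: "bij_betw f NN (Sigma AA G)"
  proof (rule bij_betw_byWitness[where f'=f'])
    show "\<forall>I\<in>NN. f' (f I) = I" by (simp add: f_def f'_def Min_img)
  next
    show "\<forall>p\<in>Sigma AA G. f (f' p) = p"
    proof
      fix p assume "p \<in> Sigma AA G"
      then obtain \<alpha> M where p: "p = (\<alpha>, M)" "\<alpha> \<in> AA" "M \<in> G \<alpha>" by blast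
      have M: "M \<in> perfect_matchings (T - \<alpha>)" and g: "good M" using p(3) by (auto simp: G_def)
      have e: "dm ` (Min ` M) = M" using good_img[OF g] .
      have "\<Union>M = T - \<alpha>" using pm_union[OF M] .
      moreover have "\<alpha> \<subseteq> T" using p(2) by (auto simp: AA_def)
      ultimately have "T - \<Union>M = \<alpha>" by blast
      then show "f (f' p) = p" using e p(1) by (simp add: f_def f'_def)
    qed
  next
    show "f ` NN \<subseteq> Sigma AA G"
    proof
      fix p assume "p \<in> f ` NN"
      then obtain I where I: "I \<in> NN" "p = f I" by blast
      have Isub: "I \<subseteq> {1..2*m - 1}" and nc: "\<forall>i\<in>I. Suc i \<notin> I" and cI: "card I = m - k"
        using I(1) by (auto simp: NN_def NC_def)
      have fI: "finite I" using Isub finite_subset by blast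
      have sub: "\<Union>(dm ` I) \<subseteq> T" using dmT[OF Isub] .
      have cU: "card (\<Union>(dm ` I)) = 2 * (m - k)" using card_dm[OF fI nc] cI by simp
      have c: "card (T - \<Union>(dm ` I)) = 2 * k"
        using card_Diff_subset[OF finite_subset[OF sub fT] sub] cU cT assms(2) by simp
      have "T - (T - \<Union>(dm ` I)) = \<Union>(dm ` I)" using sub by blast
      then have "dm ` I \<in> G (T - \<Union>(dm ` I))"
        using dm_pm[OF nc] good_dm by (simp add: G_def)
      moreover have "T - \<Union>(dm ` I) \<in> AA" using c by (auto simp: AA_def)
      ultimately show "p \<in> Sigma AA G" using I(2) by (simp add: f_def)
    qed
  next
    show "f' ` Sigma AA G \<subseteq> NN"
    proof
      fix q assume "q \<in> f' ` Sigma AA G"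
      then obtain \<alpha> M where p: "q = Min ` M" "\<alpha> \<in> AA" "M \<in> G \<alpha>" by (auto simp: f'_def)
      have M: "M \<in> perfect_matchings (T - \<alpha>)" and g: "good M" using p(3) by (auto simp: G_def)
      have aT: "\<alpha> \<subseteq> T" and ca: "card \<alpha> = 2*k" using p(2) by (auto simp: AA_def)
      have e: "dm ` (Min ` M) = M" using good_img[OF g] .
      have U: "\<Union>M = T - \<alpha>" using pm_union[OF M] .
      have nc: "\<forall>i\<in>Min ` M. Suc i \<notin> Min ` M" using pm_nc[OF M g] .
      have sub: "Min ` M \<subseteq> {1..2*m - 1}"
      proof
        fix i assume "i \<in> Min ` M"
        then have "dm i \<in> M" using e by blast
        then have "dm i \<subseteq> T" using U by blast
        then show "i \<in> {1..2*m - 1}" by (auto simp: dm_def T_def)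
      qed
      have fM: "finite (Min ` M)" using sub finite_subset by blast
      have "card (\<Union>(dm ` (Min ` M))) = 2 * card (Min ` M)" using card_dm[OF fM nc] .
      moreover have "card (\<Union>(dm ` (Min ` M))) = 2*m - 2*k"
        using e U card_Diff_subset[OF finite_subset[OF aT fT] aT] cT ca by simp
      ultimately have "card (Min ` M) = m - k" by simp
      then show "q \<in> NN" using sub nc p(1) by (simp add: NN_def NC_def)
    qed
  qed
  have "(\<Sum>\<alpha>\<in>{\<alpha>. \<alpha> \<subseteq> {1..2*m} \<and> card \<alpha> = 2*k}. hafnian (U1 m) ({1..2*m} - \<alpha>))
      = (\<Sum>\<alpha>\<in>AA. int (card (G \<alpha>)))"
    unfolding AA_def T_def G_def by (rule sum.cong[OF refl]) (rule haf_eq, blast)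
  also have "\<dots> = int (\<Sum>\<alpha>\<in>AA. card (G \<alpha>))" by simp
  also have "\<dots> = int (card (Sigma AA G))" 
  proof -
    have "card (Sigma AA G) = (\<Sum>a\<in>AA. card (G a))" by (rule card_SigmaI[OF fAA]) (simp add: fG)
    then show ?thesis by simp
  qed
  also have "\<dots> = int (card NN)" using bij_betw_same_card[OF bij] by simp
  also have "\<dots> = int ((m + k) choose (m - k))"
  proof -
    have "2*m - 1 + 1 - (m - k) = m + k" using assms by simp
    then show ?thesis by (simp add: NN_def card_NC)
  qed
  finally show ?thesis .
qed

end
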